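(* Consider the following two-bidder auction. A single good has common value $v$ with CDF $F_v$, density $f_v$, support $\mathbb{R}_+$ and finite mean, and $\mathbb{E}[v]>L\ge 0$. Alice submits a bid knowing only $F_v$; then $v$ is realized and Bob, observing $v$ but not Alice's bid, submits a bid. The highest bid wins and pays its bid (payoff $v$ minus bid) unless it is strictly below the limit price $L$, in which case the good is unsold. If the bids tie, Bob wins; if Bob's bid equals $L$ he can win; a winning bid of Alice equal exactly to $L$ results in no sale. Then in any (perfect Bayesian Nash) equilibrium, Alice obtains expected payoff $0$ from every bid she submits (i.e., from every bid in the support of her strategy).
   Context: Bidders are risk neutral. *)

theory Defs
  imports "HOL-Probability.Probability"
begin

definition value_dist :: "(real \<Rightarrow> real) \<Rightarrow> real measure" where
  "value_dist f = density lborel (\<lambda>x. ennreal (f x))"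

text \<open>Alice's expected payoff from bid a, when Bob uses the (behavioural) strategy
  B (B v is the distribution of Bob's bid given value v).  Alice wins iff Bob's bid
  is strictly below hers (ties go to Bob), and a sale happens only if a > L.\<close>
definition alice_payoff ::
  "(real \<Rightarrow> real) \<Rightarrow> (real \<Rightarrow> real measure) \<Rightarrow> real \<Rightarrow> real \<Rightarrow> real" where
  "alice_payoff f B L a =
     (if L < a then (\<integral>v. (v - a) * measure (B v) {..<a} \<partial>value_dist f) else 0)"

text \<open>Bob's expected payoff from bid b at value v, when Alice's bid has distribution A.
  Bob wins iff Alice's bid is at most his (ties to Bob) and b \<ge> L.\<close>
definition bob_payoff :: "real measure \<Rightarrow> real \<Rightarrow> real \<Rightarrow> real \<Rightarrow> real" where
  "bob_payoff A L v b = (if L \<le> b then (v - b) * measure A {..b} else 0)"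

text \<open>(Perfect Bayesian Nash) equilibrium in mixed strategies: almost every bid in the
  support of each player's strategy is a best response; Bob best responds at every
  value in the support R_+.\<close>
definition equilibrium ::
  "(real \<Rightarrow> real) \<Rightarrow> real \<Rightarrow> real measure \<Rightarrow> (real \<Rightarrow> real measure) \<Rightarrow> bool" where
  "equilibrium f L A B \<longleftrightarrow>
     (AE a in A. \<forall>a'. alice_payoff f B L a' \<le> alice_payoff f B L a) \<and>
     (\<forall>v\<ge>0. AE b in B v. \<forall>b'. bob_payoff A L v b' \<le> bob_payoff A L v b)"

end

theory Submission
  imports Defs
begin

lemma AE_null_set:
  assumes P: "prob_space M" and X: "X \<in> sets M" and ae: "AE x in M. x \<notin> X"
  shows "measure M X = 0"
  using prob_space.prob_eq_0[OF P X] ae by simp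

lemma AE_exists_in:
  assumes P: "prob_space M" and X: "X \<in> sets M" and pos: "0 < measure M X"
    and ae: "AE x in M. Q x"
  shows "\<exists>x\<in>X. Q x"
proof (rule ccontr)
  assume "\<not> ?thesis"
  then have "AE x in M. x \<notin> X" using ae by (auto elim: eventually_mono)
  then have "measure M X = 0" using AE_null_set[OF P X] by simp
  then show False using pos by simp
qed

theorem lemma2:
  fixes f :: "real \<Rightarrow> real" and L :: real
    and A :: "real measure" and B :: "real \<Rightarrow> real measure"
  assumes f_meas: "f \<in> borel_measurable borel"
    and f_nonneg: "\<forall>x. 0 \<le> f x"
    and V_prob: "prob_space (value_dist f)"
    and supp_neg: "emeasure (value_dist f) {..<0} = 0"
    and supp_pos: "\<forall>a b. 0 \<le> a \<longrightarrow> a < b \<longrightarrow> 0 < measure (value_dist f) {a<..<b}"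
    and mean_fin: "integrable (value_dist f) (\<lambda>v. v)"
    and L_nonneg: "0 \<le> L"
    and mean_gt: "(\<integral>v. v \<partial>value_dist f) > L"
    and A_prob: "prob_space A" and A_sets: "sets A = sets borel"
    and B_prob: "\<forall>v. prob_space (B v)" and B_sets: "\<forall>v. sets (B v) = sets borel"
    and B_meas: "\<forall>a. (\<lambda>v. measure (B v) {..<a}) \<in> borel_measurable borel"
    and eq: "equilibrium f L A B"
  shows "AE a in A. alice_payoff f B L a = 0"
proof -
  define V where "V = value_dist f"
  have sV: "sets V = sets borel" unfolding V_def value_dist_def by simp
  interpret A: prob_space A by (rule A_prob)
  interpret V: prob_space V using V_prob V_def by simp
  define P where "P = alice_payoff f B L"
  define S where "S = {a. \<forall>a'. P a' \<le> P a}"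
  have AES: "AE a in A. a \<in> S" using eq unfolding equilibrium_def S_def P_def by auto
  have "S \<noteq> {}"
  proof
    assume "S = {}"
    then have "AE a in A. False" using AES by simp
    then show False
      using AE_exists_in[OF A_prob, of "space A" "\<lambda>_. False"] A.prob_space by simp
  qed
  then obtain a0 where a0: "a0 \<in> S" by auto
  define M where "M = P a0"
  have SM: "\<And>a. a \<in> S \<Longrightarrow> P a = M" using a0 unfolding S_def M_def by (auto intro: antisym)
  have PL: "P L = 0" unfolding P_def alice_payoff_def by simp
  have "P L \<le> P a0" using a0 unfolding S_def by blast
  then have M0: "0 \<le> M" using PL unfolding M_def by simp
  have "M \<le> 0"
  proof (rule ccontr)
    assume "\<not> M \<le> 0"
    hence Mpos: "M > 0" by simp
    have SL: "L < a" if "a \<in> S" for a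
    proof (rule ccontr)
      assume "\<not> L < a"
      then have "P a = 0" unfolding P_def alice_payoff_def by simp
      then show False using SM[OF that] Mpos by simp
    qed
    have AL: "measure A {..L} = 0"
    proof (rule AE_null_set[OF A_prob])
      show "{..L} \<in> sets A" using A_sets by simp
      show "AE x in A. x \<notin> {..L}" using AES
        by (rule eventually_mono) (use SL in force)
    qed
    define T where "T = {c. 0 < measure A {..c}}"
    define a1 where "a1 = Inf T"
    have Tne: "T \<noteq> {}"
    proof
      assume T0: "T = {}"
      have z: "emeasure A {..real n} = 0" for n
      proof -
        have "\<not> 0 < measure A {..real n}" using T0 unfolding T_def by auto
        then have "measure A {..real n} = 0" using measure_nonneg[of A "{..real n}"] by linarith
        then show ?thesis by (simp add: A.emeasure_eq_measure)
      qed
      have "emeasure A (\<Union>n. {..real n}) = 0"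
        by (rule emeasure_UN_eq_0) (use z A_sets in auto)
      moreover have "(\<Union>n. {..real n}) = UNIV" by (auto intro: real_arch_simple)
      ultimately show False using A.emeasure_space_1 A_sets sets_eq_imp_space_eq[OF A_sets] by simp
    qed
    have TL: "L < t" if "t \<in> T" for t
    proof (rule ccontr)
      assume "\<not> L < t"
      then have "measure A {..t} \<le> measure A {..L}"
        by (intro A.finite_measure_mono) (use A_sets in auto)
      then show False using that AL unfolding T_def by simp
    qed
    have bdd: "bdd_below T" using TL unfolding bdd_below_def by (meson less_imp_le)
    have a1L: "L \<le> a1" unfolding a1_def using Tne TL by (meson cInf_greatest less_imp_le)
    have below: "measure A {..c} = 0" if "c < a1" for c
    proof -
      have "c \<notin> T" using cInf_lower[OF _ bdd, of c] that unfolding a1_def by auto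
      then show ?thesis unfolding T_def using measure_nonneg[of A "{..c}"] by simp
    qed
    have above: "0 < measure A {..c}" if ac: "a1 < c" for c
    proof -
      obtain t where t: "t \<in> T" "t < c" using cInf_lessD[OF Tne, of c] ac unfolding a1_def by blast
      have "measure A {..t} \<le> measure A {..c}"
        by (intro A.finite_measure_mono) (use A_sets t in auto)
      then show ?thesis using t unfolding T_def by simp
    qed
    have below_open: "measure A {..<a1} = 0"
    proof -
      have z: "emeasure A {..a1 - inverse (real (Suc n))} = 0" for n
        using below[of "a1 - inverse (real (Suc n))"] by (simp add: A.emeasure_eq_measure)
      have "emeasure A (\<Union>n. {..a1 - inverse (real (Suc n))}) = 0"
        by (rule emeasure_UN_eq_0) (use z A_sets in auto)
      moreover have "(\<Union>n. {..a1 - inverse (real (Suc n))}) = {..<a1}"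
      proof (auto)
        fix x assume "x < a1"
        then obtain n where n: "n > 0" "inverse (real n) < a1 - x"
          using ex_inverse_of_nat_less[of "a1 - x"] by auto
        then obtain m where "n = Suc m" using gr0_implies_Suc by blast
        then show "\<exists>m. x \<le> a1 - inverse (1 + real m)" using n by (auto intro!: exI[of _ m])
      next
        fix x :: real and m :: nat assume "x \<le> a1 - inverse (1 + real m)"
        moreover have "0 < inverse (1 + real m)" by simp
        ultimately show "x < a1" by linarith
      qed
      ultimately show ?thesis by (simp add: measure_def)
    qed
    have bobz: "measure (B v) X = 0"
      if v: "a1 < v" and X: "X \<in> sets borel" and Xz: "\<And>b. b \<in> X \<Longrightarrow> measure A {..b} = 0" for v X
    proof -
      define c where "c = (a1 + v) / 2"
      have "0 < bob_payoff A L v c"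
        unfolding bob_payoff_def using above[of c] v a1L unfolding c_def by simp
      moreover have "AE b in B v. \<forall>b'. bob_payoff A L v b' \<le> bob_payoff A L v b"
        using eq v a1L L_nonneg unfolding equilibrium_def by auto
      ultimately have "AE b in B v. b \<notin> X"
      proof (elim eventually_mono, intro notI)
        fix b assume "0 < bob_payoff A L v c" "\<forall>b'. bob_payoff A L v b' \<le> bob_payoff A L v b" "b \<in> X"
        then have "bob_payoff A L v b = 0" "bob_payoff A L v c \<le> bob_payoff A L v b"
          using Xz[of b] unfolding bob_payoff_def by auto
        then show False using \<open>0 < bob_payoff A L v c\<close> by simp
      qed
      then show ?thesis using AE_null_set[of "B v" X] B_prob B_sets X by auto
    qed
    show False
    proof (cases "measure A {..a1} = 0")
      case False
      have ae1: "AE x in A. x \<in> S \<and> \<not> x < a1"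
      proof -
        have "AE x in A. x \<notin> {..<a1}"
          using A.prob_eq_0[of "{..<a1}"] below_open A_sets by simp
        then show ?thesis using AES by eventually_elim auto
      qed
      obtain x where "x \<in> {..a1}" "x \<in> S \<and> \<not> x < a1"
        using AE_exists_in[OF A_prob _ _ ae1, of "{..a1}"] False A_sets
          measure_nonneg[of A "{..a1}"] by force
      then have a1S: "a1 \<in> S" by auto
      have "P a1 = (\<integral>v. (v - a1) * measure (B v) {..<a1} \<partial>V)"
        using SL[OF a1S] unfolding P_def alice_payoff_def V_def by simp
      also have "\<dots> \<le> 0"
      proof -
        have "(v - a1) * measure (B v) {..<a1} \<le> 0" for v
        proof (cases "v \<le> a1")
          case True then show ?thesis by (simp add: mult_nonpos_nonneg)
        next
          case False
          then have "measure (B v) {..<a1} = 0" using bobz[of v "{..<a1}"] below by auto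
          then show ?thesis by simp
        qed
        then have "0 \<le> (\<integral>v. - ((v - a1) * measure (B v) {..<a1}) \<partial>V)"
          by (intro integral_nonneg_AE) auto
        then show ?thesis by simp
      qed
      finally show False using SM[OF a1S] Mpos by simp
    next
      case True
      have ae1: "AE x in A. x \<in> S \<and> \<not> x < a1"
      proof -
        have "AE x in A. x \<notin> {..<a1}"
          using A.prob_eq_0[of "{..<a1}"] below_open A_sets by simp
        then show ?thesis using AES by eventually_elim auto
      qed
      have "\<exists>x. x \<in> S \<and> a1 \<le> x \<and> x \<le> a1 + inverse (real (Suc n))" for n
      proof -
        have "0 < measure A {..a1 + inverse (real (Suc n))}" by (rule above) simp
        then obtain x where "x \<in> {..a1 + inverse (real (Suc n))}" "x \<in> S \<and> \<not> x < a1"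
          using AE_exists_in[OF A_prob _ _ ae1, of "{..a1 + inverse (real (Suc n))}"] A_sets by force
        then show ?thesis by (auto intro!: exI[of _ x])
      qed
      then obtain xs where xs: "\<And>n. xs n \<in> S" "\<And>n. a1 \<le> xs n"
          "\<And>n. xs n \<le> a1 + inverse (real (Suc n))"
        by metis
      have xs1: "xs n \<le> a1 + 1" for n
      proof -
        have "inverse (real (Suc n)) \<le> 1" by (simp add: inverse_le_1_iff)
        then show ?thesis using xs(3)[of n] by linarith
      qed
      define w where "w v = \<bar>v\<bar> + \<bar>a1\<bar> + 1" for v
      define g where "g n v = (v - xs n) * measure (B v) {..<xs n}" for n v
      define h where "h n v = indicator {a1<..} v * w v * measure (B v) {..<xs n}" for n v
      have Bm: "(\<lambda>v. measure (B v) {..<a}) \<in> borel_measurable V" for a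
        using B_meas by (simp add: measurable_cong_sets[OF sV refl])
      have idm: "(\<lambda>v. v) \<in> borel_measurable V"
        by (simp add: measurable_cong_sets[OF sV refl])
      have wint: "integrable V w"
      proof -
        have "integrable V (\<lambda>v. v)" using mean_fin V_def by simp
        then have "integrable V (\<lambda>v. \<bar>v\<bar>)" by (rule integrable_abs)
        then have "integrable V (\<lambda>v. \<bar>v\<bar> + (\<bar>a1\<bar> + 1))" 
          using Bochner_Integration.integrable_add[where M=V and f="\<lambda>v. \<bar>v\<bar>" and g="\<lambda>_. \<bar>a1\<bar> + 1"] by simp
        then show ?thesis unfolding w_def by (simp add: add.assoc)
      qed
      have wm: "w \<in> borel_measurable V" using wint by (rule borel_measurable_integrable)
      have Bnn: "0 \<le> measure (B v) X" for v X by simp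
      have Ble1: "measure (B v) X \<le> 1" for v X
        using B_prob prob_space.prob_le_1 by blast
      have hm: "h n \<in> borel_measurable V" for n
      proof -
        have im: "indicator {a1<..} \<in> borel_measurable V"
          by (rule borel_measurable_indicator) (simp add: sV)
        show ?thesis unfolding h_def
          by (intro borel_measurable_times im wm Bm)
      qed
      have gm: "g n \<in> borel_measurable V" for n
        unfolding g_def by (intro borel_measurable_times borel_measurable_diff idm Bm borel_measurable_const)
      have hbound: "norm (h n v) \<le> w v" for n v
      proof -
        have "0 \<le> w v" unfolding w_def by simp
        then show ?thesis unfolding h_def using Bnn[of v] Ble1[of v "{..<xs n}"]
          by (auto simp: indicator_def abs_mult intro: mult_left_le)
      qed
      have hlim: "(\<lambda>n. h n v) \<longlonglongrightarrow> 0" for v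
      proof (cases "a1 < v")
        case False
        then show ?thesis unfolding h_def by simp
      next
        case av: True
        define Y where "Y n = {..a1 + inverse (real (Suc n))}" for n
        interpret Bv: prob_space "B v" using B_prob by simp
        have "(\<lambda>n. measure (B v) (Y n)) \<longlonglongrightarrow> measure (B v) (\<Inter>n. Y n)"
        proof (rule Bv.finite_Lim_measure_decseq)
          show "range Y \<subseteq> Bv.events" using B_sets unfolding Y_def by auto
          show "decseq Y" unfolding decseq_def Y_def
            by (auto simp: frac_le divide_inverse[symmetric] intro: order_trans)
        qed
        moreover have "(\<Inter>n. Y n) = {..a1}"
        proof (auto simp: Y_def)
          fix x assume x: "\<forall>n. x \<le> a1 + inverse (1 + real n)"
          show "x \<le> a1"
          proof (rule ccontr)
            assume "\<not> x \<le> a1"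
            then obtain n where n: "n > 0" "inverse (real n) < x - a1"
              using ex_inverse_of_nat_less[of "x - a1"] by auto
            then obtain m where "n = Suc m" using gr0_implies_Suc by blast
            then show False using x[rule_format, of m] n by simp
          qed
        next
          fix x n assume "x \<le> a1"
          moreover have "0 < inverse (1 + real n)" by simp
          ultimately show "x \<le> a1 + inverse (1 + real n)" by linarith
        qed
        moreover have "measure (B v) {..a1} = 0"
        proof (rule bobz[OF av])
          show "{..a1} \<in> sets borel" by simp
          fix b assume "b \<in> {..a1}"
          then have "measure A {..b} \<le> measure A {..a1}"
            by (intro A.finite_measure_mono) (use A_sets in auto)
          then show "measure A {..b} = 0" using True measure_nonneg[of A "{..b}"] by linarith
        qed
        ultimately have lim: "(\<lambda>n. measure (B v) (Y n)) \<longlonglongrightarrow> 0" by simp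
        have "(\<lambda>n. w v * measure (B v) (Y n)) \<longlonglongrightarrow> w v * 0"
          by (intro tendsto_mult tendsto_const lim)
        moreover have "h n v \<le> w v * measure (B v) (Y n)" for n
        proof -
          have "measure (B v) {..<xs n} \<le> measure (B v) (Y n)"
            using xs(3)[of n] B_sets unfolding Y_def
            by (intro Bv.finite_measure_mono) auto
          moreover have "0 \<le> w v" unfolding w_def by simp
          ultimately show ?thesis unfolding h_def using av by (simp add: mult_left_mono)
        qed
        moreover have "0 \<le> h n v" for n
          unfolding h_def w_def by simp
        ultimately show ?thesis
          using tendsto_sandwich[of "\<lambda>_. 0" "\<lambda>n. h n v" sequentially "\<lambda>n. w v * measure (B v) (Y n)" 0]
          by simp
      qed
      have conv: "(\<lambda>n. integral\<^sup>L V (h n)) \<longlonglongrightarrow> integral\<^sup>L V (\<lambda>_. 0)"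
        and hint: "\<And>n. integrable V (h n)"
        using integral_dominated_convergence[of "\<lambda>_. 0" V h w]
          integrable_dominated_convergence2[of "\<lambda>_. 0" V h w]
          hm wint hlim hbound by auto
      have gle: "M \<le> integral\<^sup>L V (h n)" for n
      proof -
        have "M = P (xs n)" using SM xs(1) by simp
        also have "\<dots> = integral\<^sup>L V (g n)"
          using SL[OF xs(1)[of n]] unfolding P_def alice_payoff_def V_def g_def by simp
        also have "\<dots> \<le> integral\<^sup>L V (h n)"
        proof (rule integral_mono)
          show "integrable V (h n)" by (rule hint)
          show "integrable V (g n)"
          proof (rule Bochner_Integration.integrable_bound[OF wint gm], intro AE_I2)
            fix v
            have "\<bar>v - xs n\<bar> \<le> w v" unfolding w_def using xs(2)[of n] xs1[of n] by linarith
            then have "\<bar>v - xs n\<bar> * measure (B v) {..<xs n} \<le> w v * 1"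
              using Bnn[of v] Ble1[of v "{..<xs n}"] by (intro mult_mono) (auto simp: w_def)
            then show "norm (g n v) \<le> norm (w v)" unfolding g_def w_def by (simp add: abs_mult)
          qed
          fix v
          show "g n v \<le> h n v"
          proof (cases "a1 < v")
            case False
            then have "v - xs n \<le> 0" using xs(2)[of n] by simp
            then show ?thesis unfolding g_def h_def using False Bnn[of v]
              by (simp add: mult_nonpos_nonneg)
          next
            case True
            have "v - xs n \<le> w v" unfolding w_def using xs(2)[of n] xs1[of n] by linarith
            then show ?thesis unfolding g_def h_def using True Bnn[of v]
              by (simp add: mult_right_mono)
          qed
        qed
        finally show ?thesis .
      qed
      have "M \<le> 0"
        using LIMSEQ_le_const[OF conv] gle by auto
      then show False using Mpos by simp
    qed
  qed
  then have "M = 0" using M0 by simp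
  then show ?thesis using AES SM unfolding P_def by (auto elim: eventually_mono)
qed

end
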